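(* Let $\Theta=\{\theta\in\mathbb{R}^p:\|\theta\|_0\le k\}$ with $k<p/2$, and for $\theta^*\in\Theta$ let $P_{\theta^*}=\mathcal{N}(\theta^*,I_p)$; consider data $X_1,\dots,X_n\stackrel{i.i.d.}{\sim}P$ where $W(P,P_{\theta^*})\le\epsilon$. There exist constants $C,c>0$ such that $$\inf_{\widehat\theta}\sup_{\theta^*\in\Theta,\;P:W(P_{\theta^*},P)\le\epsilon}\mathbb{P}\left(\|\theta^*-\widehat\theta\|_2\ge C\left(\sqrt{\frac{k\log\frac pk}{n}}\vee\epsilon\right)\right)\ge c,$$ the infimum being over all estimators based on $X_1,\dots,X_n$.
   Context: $W$ is the Wasserstein-1 distance $W(P,Q)=\inf_\Pi\mathbb{E}_\Pi\|X-Y\|_2$ over couplings. $a\vee b=\max(a,b)$. *)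

theory Defs
  imports "HOL-Probability.Probability"
begin

definition Rp :: "nat \<Rightarrow> (nat \<Rightarrow> real) measure" where
  "Rp p = PiM {..<p} (\<lambda>_. borel)"

definition l2dist :: "nat \<Rightarrow> (nat \<Rightarrow> real) \<Rightarrow> (nat \<Rightarrow> real) \<Rightarrow> real" where
  "l2dist p x y = sqrt (\<Sum>i<p. (x i - y i)\<^sup>2)"

definition gauss :: "nat \<Rightarrow> (nat \<Rightarrow> real) \<Rightarrow> (nat \<Rightarrow> real) measure" where
  "gauss p \<theta> = PiM {..<p} (\<lambda>i. density lborel (normal_density (\<theta> i) 1))"

definition couplings :: "'a measure \<Rightarrow> 'a measure \<Rightarrow> ('a \<times> 'a) measure set" where
  "couplings P Q = {M. sets M = sets (P \<Otimes>\<^sub>M Q) \<and> prob_space M \<and>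
       distr M P fst = P \<and> distr M Q snd = Q}"

definition W1 :: "nat \<Rightarrow> (nat \<Rightarrow> real) measure \<Rightarrow> (nat \<Rightarrow> real) measure \<Rightarrow> ennreal" where
  "W1 p P Q = (INF M \<in> couplings P Q. \<integral>\<^sup>+ z. ennreal (l2dist p (fst z) (snd z)) \<partial>M)"

definition sparse_vecs :: "nat \<Rightarrow> nat \<Rightarrow> (nat \<Rightarrow> real) set" where
  "sparse_vecs p k = {\<theta> \<in> space (Rp p). card {i \<in> {..<p}. \<theta> i \<noteq> 0} \<le> k}"

definition sample :: "nat \<Rightarrow> (nat \<Rightarrow> real) measure \<Rightarrow> (nat \<Rightarrow> nat \<Rightarrow> real) measure" where
  "sample n P = PiM {..<n} (\<lambda>_. P)"

definition estimators :: "nat \<Rightarrow> nat \<Rightarrow> ((nat \<Rightarrow> nat \<Rightarrow> real) \<Rightarrow> (nat \<Rightarrow> real)) set" where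
  "estimators p n = PiM {..<n} (\<lambda>_. Rp p) \<rightarrow>\<^sub>M Rp p"

definition adversary :: "nat \<Rightarrow> nat \<Rightarrow> real \<Rightarrow> ((nat \<Rightarrow> real) \<times> (nat \<Rightarrow> real) measure) set" where
  "adversary p k \<epsilon> = {(\<theta>, P). \<theta> \<in> sparse_vecs p k \<and> prob_space P \<and> sets P = sets (Rp p) \<and>
       W1 p (gauss p \<theta>) P \<le> ennreal \<epsilon>}"

end

theory Submission
  imports Defs
begin

lemma comp_component_meas:
  assumes "i \<in> I" "f \<in> M i \<rightarrow>\<^sub>M N"
  shows "(\<lambda>x. f (x i)) \<in> PiM I M \<rightarrow>\<^sub>M N"
  using measurable_compose[OF measurable_component_singleton[OF assms(1), of M] assms(2)] .

lemma PiM_density_prob: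
  assumes fin: "finite I"
    and M: "\<And>i. i \<in> I \<Longrightarrow> prob_space (M i)"
    and D: "\<And>i. i \<in> I \<Longrightarrow> prob_space (density (M i) (f i))"
    and f[measurable]: "\<And>i. i \<in> I \<Longrightarrow> f i \<in> borel_measurable (M i)"
  shows "PiM I (\<lambda>i. density (M i) (f i)) = density (PiM I M) (\<lambda>x. \<Prod>i\<in>I. f i (x i))"
proof -
  define M' where "M' = (\<lambda>i. if i \<in> I then M i else return (count_space UNIV) undefined)"
  define N' where "N' = (\<lambda>i. if i \<in> I then density (M i) (f i) else return (count_space UNIV) undefined)"
  have [simp]: "PiM I M' = PiM I M" "PiM I N' = PiM I (\<lambda>i. density (M i) (f i))"
    by (intro PiM_cong; simp add: M'_def N'_def)+
  interpret Mp: product_prob_space M'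
    by (rule product_prob_spaceI) (auto simp: M'_def intro!: prob_space_return M)
  interpret Np: product_prob_space N'
    by (rule product_prob_spaceI) (auto simp: N'_def intro!: prob_space_return D)
  have "density (PiM I M') (\<lambda>x. \<Prod>i\<in>I. f i (x i)) = PiM I N'"
  proof (rule Np.PiM_eqI[OF fin])
    show "sets (density (PiM I M') (\<lambda>x. \<Prod>i\<in>I. f i (x i))) = sets (PiM I N')"
      by (auto intro!: sets_PiM_cong simp: M'_def N'_def)
  next
    fix A assume A: "\<And>i. i \<in> I \<Longrightarrow> A i \<in> sets (N' i)"
    then have A': "\<And>i. i \<in> I \<Longrightarrow> A i \<in> sets (M i)" by (auto simp: N'_def)
    have fm: "(\<lambda>x. \<Prod>i\<in>I. f i (x i)) \<in> borel_measurable (PiM I M')"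
      unfolding \<open>PiM I M' = PiM I M\<close>
      by (rule borel_measurable_prod_ennreal, rule comp_component_meas, auto)
    have "emeasure (density (PiM I M') (\<lambda>x. \<Prod>i\<in>I. f i (x i))) (Pi\<^sub>E I A)
        = (\<integral>\<^sup>+ x. (\<Prod>i\<in>I. f i (x i)) * indicator (Pi\<^sub>E I A) x \<partial>PiM I M')"
      apply (rule emeasure_density[OF fm])
      using A' by (auto simp: M'_def intro!: sets_PiM_I_finite fin)
    also have "\<dots> = (\<integral>\<^sup>+ x. (\<Prod>i\<in>I. f i (x i) * indicator (A i) (x i)) \<partial>PiM I M')"
      apply (rule nn_integral_cong)
      using fin by (auto simp: space_PiM prod.distrib indicator_def PiE_def Pi_def extensional_def)
    also have "\<dots> = (\<Prod>i\<in>I. \<integral>\<^sup>+ y. f i y * indicator (A i) y \<partial>M' i)"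
      apply (rule Mp.product_nn_integral_prod[OF fin])
      using A' by (auto simp: M'_def)
    also have "\<dots> = (\<Prod>i\<in>I. emeasure (N' i) (A i))"
      apply (rule prod.cong, simp)
      using A' by (auto simp: M'_def N'_def emeasure_density)
    finally show "emeasure (density (PiM I M') (\<lambda>x. \<Prod>i\<in>I. f i (x i))) (Pi\<^sub>E I A) = (\<Prod>i\<in>I. emeasure (N' i) (A i))" .
  qed
  then show ?thesis by simp
qed

lemma distr_PiM_prob:
  assumes fin: "finite I"
  assumes "\<And>i. i \<in> I \<Longrightarrow> prob_space (M i)"
  assumes "\<And>i. i \<in> I \<Longrightarrow> prob_space (M' i)"
  assumes [measurable]: "\<And>i. i \<in> I \<Longrightarrow> f i \<in> measurable (M i) (M' i)"
  shows   "distr (PiM I M) (PiM I M') (\<lambda>x. \<lambda>i\<in>I. f i (x i)) = PiM I (\<lambda>i. distr (M i) (M' i) (f i))"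
proof -
  define N where "N = (\<lambda>i. if i \<in> I then M i else return (count_space UNIV) undefined)"
  define N' where "N' = (\<lambda>i. if i \<in> I then M' i else return (count_space UNIV) undefined)"
  define D where "D = (\<lambda>i. if i \<in> I then distr (M i) (M' i) (f i) else return (count_space UNIV) undefined)"
  have [simp]: "PiM I N = PiM I M" "PiM I N' = PiM I M'" "PiM I D = PiM I (\<lambda>i. distr (M i) (M' i) (f i))"
    by (intro PiM_cong; simp add: N_def N'_def D_def)+
  interpret Np: product_prob_space N
    by (rule product_prob_spaceI) (auto simp: N_def intro!: prob_space_return assms)
  interpret Dp: product_prob_space D
    by (rule product_prob_spaceI) (auto simp: D_def intro!: prob_space_return prob_space.prob_space_distr assms)
  have "distr (PiM I N) (PiM I N') (\<lambda>x. \<lambda>i\<in>I. f i (x i)) = PiM I D"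
  proof (rule Dp.PiM_eqI[OF fin])
    show "sets (distr (PiM I N) (PiM I N') (\<lambda>x. \<lambda>i\<in>I. f i (x i))) = sets (PiM I D)"
      by (auto intro!: sets_PiM_cong simp: N'_def D_def)
  next
    fix A assume A: "\<And>i. i \<in> I \<Longrightarrow> A i \<in> sets (D i)"
    then have A': "\<And>i. i \<in> I \<Longrightarrow> A i \<in> sets (M' i)" by (auto simp: D_def)
    have fm: "(\<lambda>x. \<lambda>i\<in>I. f i (x i)) \<in> PiM I N \<rightarrow>\<^sub>M PiM I N'"
      unfolding \<open>PiM I N = PiM I M\<close> \<open>PiM I N' = PiM I M'\<close>
      by (rule measurable_restrict, rule comp_component_meas, auto)
    have "emeasure (distr (PiM I N) (PiM I N') (\<lambda>x. \<lambda>i\<in>I. f i (x i))) (Pi\<^sub>E I A)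
       = emeasure (PiM I N) ((\<lambda>x. \<lambda>i\<in>I. f i (x i)) -` Pi\<^sub>E I A \<inter> space (PiM I N))"
      apply (rule emeasure_distr[OF fm])
      using A' by (auto simp: N'_def intro!: sets_PiM_I_finite fin)
    also have "(\<lambda>x. \<lambda>i\<in>I. f i (x i)) -` Pi\<^sub>E I A \<inter> space (PiM I N) = Pi\<^sub>E I (\<lambda>i. f i -` A i \<inter> space (M i))"
      by (auto simp: space_PiM PiE_def Pi_def extensional_def N_def)
    also have "emeasure (PiM I N) (Pi\<^sub>E I (\<lambda>i. f i -` A i \<inter> space (M i))) = (\<Prod>i\<in>I. emeasure (N i) (f i -` A i \<inter> space (M i)))"
      apply (rule Np.emeasure_PiM[OF fin])
      using A' by (auto simp: N_def)
    also have "\<dots> = (\<Prod>i\<in>I. emeasure (D i) (A i))"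
      apply (rule prod.cong, simp)
      using A' by (auto simp: N_def D_def emeasure_distr)
    finally show "emeasure (distr (PiM I N) (PiM I N') (\<lambda>x. \<lambda>i\<in>I. f i (x i))) (Pi\<^sub>E I A) = (\<Prod>i\<in>I. emeasure (D i) (A i))" .
  qed
  then show ?thesis by simp
qed


definition gdens :: "real \<Rightarrow> real \<Rightarrow> real" where
  "gdens t x = exp (t * x - t\<^sup>2 / 2)"

lemma gdens_pos: "0 < gdens t x" by (simp add: gdens_def)

lemma gdens_meas[measurable]: "gdens t \<in> borel_measurable borel"
  unfolding gdens_def by measurable

lemma nd_factor: "normal_density t 1 x = normal_density 0 1 x * gdens t x"
proof -
  have "exp (-(x - t)\<^sup>2 / 2) = exp (-(x - 0)\<^sup>2 / 2 + (t * x - t\<^sup>2 / 2))"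
    by (rule arg_cong[where f=exp]) (simp add: power2_eq_square field_simps)
  also have "\<dots> = exp (-(x - 0)\<^sup>2 / 2) * exp (t * x - t\<^sup>2 / 2)"
    by (rule exp_add)
  finally have "exp (-(x - t)\<^sup>2 / 2) = exp (-(x - 0)\<^sup>2 / 2) * exp (t * x - t\<^sup>2 / 2)" .
  then show ?thesis by (simp add: normal_density_def gdens_def)
qed

lemma nd_sq_factor: "normal_density 0 1 x * (gdens t x)\<^sup>2 = exp (t\<^sup>2) * normal_density (2*t) 1 x"
proof -
  have "exp (-(x - 0)\<^sup>2 / 2) * (exp (t * x - t\<^sup>2 / 2))\<^sup>2 = exp (-(x - 0)\<^sup>2 / 2 + (t * x - t\<^sup>2 / 2) + (t * x - t\<^sup>2 / 2))"
    by (simp only: exp_add power2_eq_square mult.assoc)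
  also have "\<dots> = exp (t\<^sup>2 + (-(x - 2*t)\<^sup>2 / 2))"
    by (rule arg_cong[where f=exp]) (simp add: power2_eq_square field_simps)
  also have "\<dots> = exp (t\<^sup>2) * exp (-(x - 2*t)\<^sup>2 / 2)"
    by (rule exp_add)
  finally have "exp (-(x - 0)\<^sup>2 / 2) * (exp (t * x - t\<^sup>2 / 2))\<^sup>2 = exp (t\<^sup>2) * exp (-(x - 2*t)\<^sup>2 / 2)" .
  then show ?thesis by (simp add: normal_density_def gdens_def)
qed

lemma N01_prob: "prob_space (density lborel (\<lambda>x. ennreal (normal_density \<mu> 1 x)))"
  by (rule prob_space_normal_density) simp

lemma N01_shift_density:
  "density lborel (\<lambda>x. ennreal (normal_density t 1 x)) =
   density (density lborel (\<lambda>x. ennreal (normal_density 0 1 x))) (\<lambda>x. ennreal (gdens t x))"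
proof -
  have eq: "\<And>x. ennreal (normal_density t 1 x) = ennreal (normal_density 0 1 x) * ennreal (gdens t x)"
    by (simp only: nd_factor[of t]) (rule ennreal_mult; simp add: gdens_def)
  show ?thesis by (subst density_density_eq) (simp_all only: eq, measurable)
qed

lemma sets_gauss[simp]: "sets (gauss p \<theta>) = sets (Rp p)"
  unfolding gauss_def Rp_def by (rule sets_PiM_cong) simp_all

lemma space_gauss[simp]: "space (gauss p \<theta>) = space (Rp p)"
  using sets_eq_imp_space_eq[OF sets_gauss] .

lemma prob_gauss: "prob_space (gauss p \<theta>)"
  unfolding gauss_def by (rule prob_space_PiM) (simp add: N01_prob)

lemma gauss_density:
  "gauss p \<theta> = density (gauss p (\<lambda>_. 0)) (\<lambda>x. ennreal (\<Prod>j<p. gdens (\<theta> j) (x j)))"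
proof -
  have "gauss p \<theta> = PiM {..<p} (\<lambda>j. density (density lborel (\<lambda>x. ennreal (normal_density 0 1 x))) (\<lambda>x. ennreal (gdens (\<theta> j) x)))"
    unfolding gauss_def by (rule PiM_cong, simp, rule N01_shift_density)
  also have "\<dots> = density (PiM {..<p} (\<lambda>j. density lborel (\<lambda>x. ennreal (normal_density 0 1 x))))
        (\<lambda>x. \<Prod>j<p. ennreal (gdens (\<theta> j) (x j)))"
    apply (rule PiM_density_prob)
    using N01_prob N01_shift_density[symmetric] by (auto simp del: N01_shift_density)
  also have "\<dots> = density (gauss p (\<lambda>_. 0)) (\<lambda>x. ennreal (\<Prod>j<p. gdens (\<theta> j) (x j)))"
    unfolding gauss_def by (simp add: prod_ennreal gdens_pos less_imp_le)
  finally show ?thesis .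
qed

lemma gauss_dens_meas[measurable]: "(\<lambda>x. \<Prod>j<p. gdens (\<theta> j) (x j)) \<in> borel_measurable (gauss p \<theta>')"
  unfolding gauss_def
  by (rule borel_measurable_prod, rule comp_component_meas, auto)

definition Fd :: "nat \<Rightarrow> nat \<Rightarrow> (nat \<Rightarrow> real) \<Rightarrow> (nat \<Rightarrow> nat \<Rightarrow> real) \<Rightarrow> real" where
  "Fd n p \<theta> xs = (\<Prod>i<n. \<Prod>j<p. gdens (\<theta> j) (xs i j))"

lemma Fd_nonneg: "0 \<le> Fd n p \<theta> xs"
  unfolding Fd_def by (auto intro!: prod_nonneg simp: gdens_pos less_imp_le)

lemma Fd_meas[measurable]: "Fd n p \<theta> \<in> borel_measurable (sample n (gauss p \<theta>'))"
  unfolding Fd_def sample_def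
  by (rule borel_measurable_prod, rule comp_component_meas, auto)

lemma sample_density:
  "sample n (gauss p \<theta>) = density (sample n (gauss p (\<lambda>_. 0))) (\<lambda>xs. ennreal (Fd n p \<theta> xs))"
proof -
  have "sample n (gauss p \<theta>) = PiM {..<n} (\<lambda>_. density (gauss p (\<lambda>_. 0)) (\<lambda>x. ennreal (\<Prod>j<p. gdens (\<theta> j) (x j))))"
    unfolding sample_def by (subst gauss_density) simp
  also have "\<dots> = density (sample n (gauss p (\<lambda>_. 0))) (\<lambda>xs. \<Prod>i<n. ennreal (\<Prod>j<p. gdens (\<theta> j) (xs i j)))"
    unfolding sample_def
    apply (rule PiM_density_prob)
    using prob_gauss gauss_density[symmetric] by auto
  also have "\<dots> = density (sample n (gauss p (\<lambda>_. 0))) (\<lambda>xs. ennreal (Fd n p \<theta> xs))"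
    unfolding Fd_def
    by (subst prod_ennreal) (auto intro!: prod_nonneg simp: gdens_pos less_imp_le)
  finally show ?thesis .
qed

lemma nn_int_gdens_sq: "(\<integral>\<^sup>+ y. ennreal ((gdens t y)\<^sup>2) \<partial>density lborel (\<lambda>x. ennreal (normal_density 0 1 x))) = ennreal (exp (t\<^sup>2))"
proof -
  have "(\<integral>\<^sup>+ y. ennreal ((gdens t y)\<^sup>2) \<partial>density lborel (\<lambda>x. ennreal (normal_density 0 1 x)))
      = (\<integral>\<^sup>+ y. ennreal (normal_density 0 1 y) * ennreal ((gdens t y)\<^sup>2) \<partial>lborel)"
    by (subst nn_integral_density) auto
  also have "\<dots> = (\<integral>\<^sup>+ y. ennreal (exp (t\<^sup>2)) * ennreal (normal_density (2*t) 1 y) \<partial>lborel)"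
    by (simp add: ennreal_mult[symmetric] nd_sq_factor)
  also have "\<dots> = ennreal (exp (t\<^sup>2)) * (\<integral>\<^sup>+ y. ennreal (normal_density (2*t) 1 y) \<partial>lborel)"
    by (rule nn_integral_cmult) auto
  also have "(\<integral>\<^sup>+ y. ennreal (normal_density (2*t) 1 y) \<partial>lborel) = 1"
    using prob_space.emeasure_space_1[OF N01_prob[of "2*t"]]
    by (simp add: emeasure_density)
  finally show ?thesis by simp
qed

lemma nn_int_Fd_sq:
  "(\<integral>\<^sup>+ xs. ennreal ((Fd n p \<theta> xs)\<^sup>2) \<partial>sample n (gauss p (\<lambda>_. 0))) = ennreal (exp (real n * (\<Sum>j<p. (\<theta> j)\<^sup>2)))"
proof -
  let ?G = "gauss p (\<lambda>_. 0)"
  let ?N = "density lborel (\<lambda>x. ennreal (normal_density 0 1 x))"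
  interpret S: product_prob_space "\<lambda>_::nat. ?G"
    by (rule product_prob_spaceI) (rule prob_gauss)
  interpret T: product_prob_space "\<lambda>_::nat. ?N"
    by (rule product_prob_spaceI) (rule N01_prob)
  have inner: "(\<integral>\<^sup>+ x. ennreal ((\<Prod>j<p. gdens (\<theta> j) (x j))\<^sup>2) \<partial>?G) = ennreal (exp (\<Sum>j<p. (\<theta> j)\<^sup>2))"
  proof -
    have "(\<integral>\<^sup>+ x. ennreal ((\<Prod>j<p. gdens (\<theta> j) (x j))\<^sup>2) \<partial>?G)
        = (\<integral>\<^sup>+ x. (\<Prod>j<p. ennreal ((gdens (\<theta> j) (x j))\<^sup>2)) \<partial>PiM {..<p} (\<lambda>_. ?N))"
      unfolding gauss_def
      by (auto simp: prod_ennreal power_mult_distrib prod_power_distrib intro!: nn_integral_cong)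
    also have "\<dots> = (\<Prod>j<p. \<integral>\<^sup>+ y. ennreal ((gdens (\<theta> j) y)\<^sup>2) \<partial>?N)"
      by (rule T.product_nn_integral_prod) auto
    also have "\<dots> = (\<Prod>j<p. ennreal (exp ((\<theta> j)\<^sup>2)))"
      by (simp add: nn_int_gdens_sq)
    also have "\<dots> = ennreal (exp (\<Sum>j<p. (\<theta> j)\<^sup>2))"
      by (simp add: prod_ennreal exp_sum)
    finally show ?thesis .
  qed
  have "(\<integral>\<^sup>+ xs. ennreal ((Fd n p \<theta> xs)\<^sup>2) \<partial>sample n ?G)
      = (\<integral>\<^sup>+ xs. (\<Prod>i<n. ennreal ((\<Prod>j<p. gdens (\<theta> j) (xs i j))\<^sup>2)) \<partial>PiM {..<n} (\<lambda>_. ?G))"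
    unfolding sample_def Fd_def
    by (auto simp: prod_ennreal prod_power_distrib[symmetric] intro!: nn_integral_cong)
  also have "\<dots> = (\<Prod>i<n. \<integral>\<^sup>+ x. ennreal ((\<Prod>j<p. gdens (\<theta> j) (x j))\<^sup>2) \<partial>?G)"
    by (rule S.product_nn_integral_prod) auto
  also have "\<dots> = ennreal (exp (\<Sum>j<p. (\<theta> j)\<^sup>2)) ^ n"
    by (simp add: inner)
  also have "\<dots> = ennreal (exp (real n * (\<Sum>j<p. (\<theta> j)\<^sup>2)))"
    by (simp add: ennreal_power exp_of_nat_mult)
  finally show ?thesis .
qed


lemma N01_shift_distr:
  "distr (density lborel (\<lambda>x. ennreal (normal_density a 1 x))) borel (\<lambda>y. y + b) =
   density lborel (\<lambda>x. ennreal (normal_density (a + b) 1 x))"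
proof -
  have "density lborel (\<lambda>x. ennreal (normal_density (a + b) 1 x)) =
        density (distr lborel borel ((+) b)) (\<lambda>x. ennreal (normal_density (a + b) 1 x))"
    by (simp add: lborel_distr_plus)
  also have "\<dots> = distr (density lborel (\<lambda>x. ennreal (normal_density (a + b) 1 (b + x)))) borel ((+) b)"
    by (rule density_distr) auto
  also have "(\<lambda>x. ennreal (normal_density (a + b) 1 (b + x))) = (\<lambda>x. ennreal (normal_density a 1 x))"
    by (simp add: normal_density_def algebra_simps)
  also have "distr (density lborel (\<lambda>x. ennreal (normal_density a 1 x))) borel ((+) b) =
             distr (density lborel (\<lambda>x. ennreal (normal_density a 1 x))) borel (\<lambda>y. y + b)"
    by (rule distr_cong) (auto simp: add.commute)
  finally show ?thesis ..
qed

definition shiftv :: "nat \<Rightarrow> (nat \<Rightarrow> real) \<Rightarrow> (nat \<Rightarrow> real) \<Rightarrow> (nat \<Rightarrow> real) \<Rightarrow> (nat \<Rightarrow> real)" where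
  "shiftv p \<theta> \<theta>' x = (\<lambda>i\<in>{..<p}. x i + (\<theta>' i - \<theta> i))"

lemma gauss_shift:
  "distr (gauss p \<theta>) (gauss p \<theta>') (shiftv p \<theta> \<theta>') = gauss p \<theta>'"
proof -
  have "distr (gauss p \<theta>) (gauss p \<theta>') (shiftv p \<theta> \<theta>') =
    PiM {..<p} (\<lambda>i. distr (density lborel (\<lambda>x. ennreal (normal_density (\<theta> i) 1 x)))
                      (density lborel (\<lambda>x. ennreal (normal_density (\<theta>' i) 1 x))) (\<lambda>y. y + (\<theta>' i - \<theta> i)))"
    unfolding gauss_def shiftv_def
    apply (rule distr_PiM_prob)
    by (auto simp: N01_prob)
  also have "\<dots> = gauss p \<theta>'"
    unfolding gauss_def
    apply (rule PiM_cong, simp)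
    apply (subst distr_cong[where L=borel and g="\<lambda>y. y + (\<theta>' i - \<theta> i)" and K="density lborel (\<lambda>x. ennreal (normal_density (\<theta> i) 1 x))" for i])
    apply (auto simp: N01_shift_distr)
    done
  finally show ?thesis .
qed

lemma l2dist_meas_pair[measurable]:
  "(\<lambda>z. l2dist p (fst z) (snd z)) \<in> borel_measurable (Rp p \<Otimes>\<^sub>M Rp p)"
  unfolding l2dist_def Rp_def
  by measurable

lemma shiftv_meas: "shiftv p \<theta> \<theta>' \<in> Rp p \<rightarrow>\<^sub>M Rp p"
  unfolding shiftv_def Rp_def
  by (rule measurable_restrict, rule comp_component_meas, auto)

lemma l2dist_shift: "x \<in> space (Rp p) \<Longrightarrow> l2dist p x (shiftv p \<theta> \<theta>' x) = l2dist p \<theta> \<theta>'"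
  unfolding l2dist_def shiftv_def
  by (auto intro!: arg_cong[where f=sqrt] sum.cong simp: power2_commute)

lemma W1_gauss: "W1 p (gauss p \<theta>) (gauss p \<theta>') \<le> ennreal (l2dist p \<theta> \<theta>')"
proof -
  let ?G = "gauss p \<theta>" and ?G' = "gauss p \<theta>'"
  let ?f = "\<lambda>x. (x, shiftv p \<theta> \<theta>' x)"
  define M where "M = distr ?G (?G \<Otimes>\<^sub>M ?G') ?f"
  interpret G: prob_space ?G by (rule prob_gauss)
  have sh: "shiftv p \<theta> \<theta>' \<in> ?G \<rightarrow>\<^sub>M ?G'"
    using shiftv_meas by (simp add: measurable_cong_sets[OF sets_gauss sets_gauss])
  have fm: "?f \<in> ?G \<rightarrow>\<^sub>M ?G \<Otimes>\<^sub>M ?G'"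
    by (rule measurable_Pair[OF measurable_ident_sets[OF refl] sh])
  have "M \<in> couplings ?G ?G'"
    unfolding couplings_def
  proof (intro CollectI conjI)
    show "sets M = sets (?G \<Otimes>\<^sub>M ?G')" by (simp add: M_def)
    show "prob_space M" unfolding M_def by (rule G.prob_space_distr[OF fm])
    show "distr M ?G fst = ?G"
      unfolding M_def
      apply (subst distr_distr)
      apply (rule measurable_fst)
      apply (rule fm)
      apply (subst distr_cong[where g="\<lambda>x. x" and K="?G" and L="?G"])
      apply (auto simp: comp_def)
      done
    show "distr M ?G' snd = ?G'"
      unfolding M_def
      apply (subst distr_distr)
      apply (rule measurable_snd)
      apply (rule fm)
      apply (subst distr_cong[where g="shiftv p \<theta> \<theta>'" and K="?G" and L="?G'"])
      apply (auto simp: comp_def gauss_shift)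
      done
  qed
  then have "W1 p ?G ?G' \<le> (\<integral>\<^sup>+ z. ennreal (l2dist p (fst z) (snd z)) \<partial>M)"
    unfolding W1_def by (rule INF_lower)
  also have "\<dots> = (\<integral>\<^sup>+ x. ennreal (l2dist p x (shiftv p \<theta> \<theta>' x)) \<partial>?G)"
    unfolding M_def
    apply (subst nn_integral_distr[OF fm])
    using l2dist_meas_pair apply (simp add: measurable_cong_sets[OF sets_pair_measure_cong[OF sets_gauss sets_gauss] refl])
    apply simp
    done
  also have "\<dots> = (\<integral>\<^sup>+ x. ennreal (l2dist p \<theta> \<theta>') \<partial>?G)"
    by (rule nn_integral_cong) (simp add: l2dist_shift)
  also have "\<dots> = ennreal (l2dist p \<theta> \<theta>')"
    using G.emeasure_space_1 by simp
  finally show ?thesis .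
qed



lemma sum_blocks: "(\<Sum>i<k*m. f i) = (\<Sum>b<k. \<Sum>c<m. f (b*m+c))" for f :: "nat \<Rightarrow> real"
proof -
  have "(\<Sum>i<k*m. f i) = (\<Sum>b<k. sum f {b*m..<b*m+m})"
    by (rule sum.nat_group[symmetric])
  also have "\<dots> = (\<Sum>b<k. \<Sum>c<m. f (b*m+c))"
  proof (rule sum.cong[OF refl])
    fix b
    show "sum f {b*m..<b*m+m} = (\<Sum>c<m. f (b*m+c))"
      using sum.shift_bounds_nat_ivl[of f 0 "b*m" m] by (simp add: atLeast0LessThan add.commute)
  qed
  finally show ?thesis .
qed

definition hyp :: "nat \<Rightarrow> nat \<Rightarrow> nat \<Rightarrow> real \<Rightarrow> (nat \<Rightarrow> nat) \<Rightarrow> (nat \<Rightarrow> real)" where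
  "hyp p k m \<delta> s = (\<lambda>i\<in>{..<p}. if i < k*m \<and> s (i div m) = i mod m then \<delta> else 0)"

definition hdist :: "nat \<Rightarrow> (nat \<Rightarrow> nat) \<Rightarrow> (nat \<Rightarrow> nat) \<Rightarrow> nat" where
  "hdist k s s' = card {b\<in>{..<k}. s b \<noteq> s' b}"

lemma hyp_block:
  assumes "b < k" "c < m" "k*m \<le> p"
  shows "hyp p k m \<delta> s (b*m+c) = (if s b = c then \<delta> else 0)"
proof -
  have lt: "b*m + c < k*m"
  proof -
    have "b*m + c < b*m + m" using assms by simp
    also have "\<dots> = Suc b * m" by simp
    also have "\<dots> \<le> k*m" using assms by (intro mult_right_mono) auto
    finally show ?thesis .
  qed
  then show ?thesis using assms unfolding hyp_def by auto
qed

lemma sum_restrict_km: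
  fixes g :: "nat \<Rightarrow> real"
  assumes "k*m \<le> p" "\<And>i. k*m \<le> i \<Longrightarrow> i < p \<Longrightarrow> g i = 0"
  shows "(\<Sum>i<p. g i) = (\<Sum>i<k*m. g i)"
  by (rule sum.mono_neutral_right) (use assms in auto)

lemma hyp_dist_sq:
  assumes km: "k*m \<le> p" and s: "s \<in> PiE {..<k} (\<lambda>_. {..<m})" and s': "s' \<in> PiE {..<k} (\<lambda>_. {..<m})"
  shows "(\<Sum>i<p. (hyp p k m \<delta> s i - hyp p k m \<delta> s' i)\<^sup>2) = 2 * \<delta>\<^sup>2 * real (hdist k s s')"
proof -
  have "(\<Sum>i<p. (hyp p k m \<delta> s i - hyp p k m \<delta> s' i)\<^sup>2) = (\<Sum>i<k*m. (hyp p k m \<delta> s i - hyp p k m \<delta> s' i)\<^sup>2)"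
    by (rule sum_restrict_km[OF km]) (auto simp: hyp_def)
  also have "\<dots> = (\<Sum>b<k. \<Sum>c<m. (hyp p k m \<delta> s (b*m+c) - hyp p k m \<delta> s' (b*m+c))\<^sup>2)"
    by (rule sum_blocks)
  also have "\<dots> = (\<Sum>b<k. if s b = s' b then 0 else 2 * \<delta>\<^sup>2)"
  proof (rule sum.cong[OF refl])
    fix b assume b: "b \<in> {..<k}"
    then have sb: "s b < m" "s' b < m" using s s' by (auto simp: PiE_def Pi_def)
    have "(\<Sum>c<m. (hyp p k m \<delta> s (b*m+c) - hyp p k m \<delta> s' (b*m+c))\<^sup>2)
        = (\<Sum>c<m. ((if s b = c then \<delta> else 0) - (if s' b = c then \<delta> else 0))\<^sup>2)"
      using b km by (intro sum.cong) (auto simp: hyp_block)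
    also have "\<dots> = (if s b = s' b then 0 else 2 * \<delta>\<^sup>2)"
    proof (cases "s b = s' b")
      case True then show ?thesis by simp
    next
      case False
      have "(\<Sum>c<m. ((if s b = c then \<delta> else 0) - (if s' b = c then \<delta> else 0))\<^sup>2)
          = (\<Sum>c<m. (if c = s b then \<delta>\<^sup>2 else 0) + (if c = s' b then \<delta>\<^sup>2 else 0))"
        using False by (intro sum.cong) auto
      also have "\<dots> = 2 * \<delta>\<^sup>2" using sb by (simp add: sum.distrib)
      finally show ?thesis using False by simp
    qed
    finally show "(\<Sum>c<m. (hyp p k m \<delta> s (b*m+c) - hyp p k m \<delta> s' (b*m+c))\<^sup>2) = (if s b = s' b then 0 else 2 * \<delta>\<^sup>2)" .
  qed
  also have "\<dots> = (\<Sum>b\<in>{b\<in>{..<k}. s b \<noteq> s' b}. 2 * \<delta>\<^sup>2)"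
    by (rule sum.mono_neutral_cong_right) auto
  also have "\<dots> = 2 * \<delta>\<^sup>2 * real (hdist k s s')"
    by (simp add: hdist_def)
  finally show ?thesis .
qed

lemma hyp_norm_sq:
  assumes km: "k*m \<le> p" and s: "s \<in> PiE {..<k} (\<lambda>_. {..<m})"
  shows "(\<Sum>i<p. (hyp p k m \<delta> s i)\<^sup>2) = real k * \<delta>\<^sup>2"
proof -
  have "(\<Sum>i<p. (hyp p k m \<delta> s i)\<^sup>2) = (\<Sum>i<k*m. (hyp p k m \<delta> s i)\<^sup>2)"
    by (rule sum_restrict_km[OF km]) (auto simp: hyp_def)
  also have "\<dots> = (\<Sum>b<k. \<Sum>c<m. (hyp p k m \<delta> s (b*m+c))\<^sup>2)"
    by (rule sum_blocks)
  also have "\<dots> = (\<Sum>b<k. \<delta>\<^sup>2)"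
  proof (rule sum.cong[OF refl])
    fix b assume b: "b \<in> {..<k}"
    then have sb: "s b < m" using s by (auto simp: PiE_def Pi_def)
    have "(\<Sum>c<m. (hyp p k m \<delta> s (b*m+c))\<^sup>2) = (\<Sum>c<m. (if c = s b then \<delta>\<^sup>2 else 0))"
      using b km by (intro sum.cong) (auto simp: hyp_block)
    also have "\<dots> = \<delta>\<^sup>2" using sb by simp
    finally show "(\<Sum>c<m. (hyp p k m \<delta> s (b*m+c))\<^sup>2) = \<delta>\<^sup>2" .
  qed
  also have "\<dots> = real k * \<delta>\<^sup>2" by simp
  finally show ?thesis .
qed

lemma hyp_sparse:
  assumes "0 < m"
  shows "hyp p k m \<delta> s \<in> sparse_vecs p k"
proof -
  have sub: "{i \<in> {..<p}. hyp p k m \<delta> s i \<noteq> 0} \<subseteq> (\<lambda>b. b*m + s b) ` {..<k}"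
  proof
    fix i assume "i \<in> {i \<in> {..<p}. hyp p k m \<delta> s i \<noteq> 0}"
    then have i: "i < k*m" "s (i div m) = i mod m"
      by (auto simp: hyp_def split: if_splits)
    have "i div m < k" using i(1) assms by (simp add: less_mult_imp_div_less)
    moreover have "i = (i div m)*m + s (i div m)" using i(2) by simp
    ultimately show "i \<in> (\<lambda>b. b*m + s b) ` {..<k}" by blast
  qed
  have "card {i \<in> {..<p}. hyp p k m \<delta> s i \<noteq> 0} \<le> card ((\<lambda>b. b*m + s b) ` {..<k})"
    by (rule card_mono[OF _ sub]) simp
  also have "\<dots> \<le> k" using card_image_le[of "{..<k}" "\<lambda>b. b*m + s b"] by simp
  finally have "card {i \<in> {..<p}. hyp p k m \<delta> s i \<noteq> 0} \<le> k" .
  moreover have "hyp p k m \<delta> s \<in> space (Rp p)"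
    by (simp add: Rp_def space_PiM hyp_def)
  ultimately show ?thesis by (simp add: sparse_vecs_def)
qed

lemma count_bound:
  assumes m: "1 \<le> m" and s0: "s0 \<in> PiE {..<k} (\<lambda>_. {..<m})" and h: "0 \<le> h"
  shows "real (card {s \<in> PiE {..<k} (\<lambda>_. {..<m}). real (hdist k s s0) < h}) \<le> real m powr h * (2 - 1 / real m) ^ k"
proof -
  let ?S = "PiE {..<k} (\<lambda>_. {..<m::nat})"
  let ?w = "\<lambda>b c. if c = s0 b then 1 else 1 / real m"
  have fin: "finite ?S" by (simp add: finite_PiE)
  have mpos: "0 < real m" using m by simp
  have "real (card {s \<in> ?S. real (hdist k s s0) < h}) = (\<Sum>s\<in>{s \<in> ?S. real (hdist k s s0) < h}. 1)"
    by (rule real_of_card)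
  also have "\<dots> \<le> (\<Sum>s\<in>?S. real m powr (h - real (hdist k s s0)))"
  proof (rule sum_le_included[where i="\<lambda>s. s"])
    show "finite {s \<in> ?S. real (hdist k s s0) < h}" using fin by simp
    show "finite ?S" by fact
    show "\<forall>y\<in>?S. 0 \<le> real m powr (h - real (hdist k y s0))" by simp
    show "\<forall>x\<in>{s \<in> ?S. real (hdist k s s0) < h}. \<exists>y\<in>?S. y = x \<and> 1 \<le> real m powr (h - real (hdist k y s0))"
    proof
      fix x assume x: "x \<in> {s \<in> ?S. real (hdist k s s0) < h}"
      have "1 \<le> real m powr (h - real (hdist k x s0))"
        by (rule ge_one_powr_ge_zero) (use m x in auto)
      then show "\<exists>y\<in>?S. y = x \<and> 1 \<le> real m powr (h - real (hdist k y s0))" using x by blast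
    qed
  qed
  also have "\<dots> = real m powr h * (\<Sum>s\<in>?S. \<Prod>b<k. ?w b (s b))"
  proof -
    have "real m powr (h - real (hdist k s s0)) = real m powr h * (\<Prod>b<k. ?w b (s b))" for s
    proof -
      have "(\<Prod>b<k. ?w b (s b)) = (\<Prod>b\<in>{b\<in>{..<k}. s b \<noteq> s0 b}. 1 / real m)"
        by (rule prod.mono_neutral_cong_right) auto
      also have "\<dots> = (1 / real m) ^ hdist k s s0" by (simp add: hdist_def)
      finally have "(\<Prod>b<k. ?w b (s b)) = (1 / real m) ^ hdist k s s0" .
      moreover have "real m powr (h - real (hdist k s s0)) = real m powr h / real m ^ hdist k s s0"
        using mpos by (simp add: powr_diff powr_realpow)
      ultimately show ?thesis
        by (simp add: power_one_over)
    qed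
    then show ?thesis by (simp add: sum_distrib_left)
  qed
  also have "(\<Sum>s\<in>?S. \<Prod>b<k. ?w b (s b)) = (\<Prod>b<k. \<Sum>c<m. ?w b c)"
    by (rule prod_sum_PiE[symmetric]) auto
  also have "\<dots> = (\<Prod>b<k. (2 - 1 / real m))"
  proof (rule prod.cong[OF refl])
    fix b assume b: "b \<in> {..<k}"
    then have sb: "s0 b < m" using s0 by (auto simp: PiE_def Pi_def)
    have "(\<Sum>c<m. ?w b c) = (\<Sum>c<m. (if c = s0 b then 1 - 1 / real m else 0) + 1 / real m)"
      by (intro sum.cong) auto
    also have "\<dots> = 1 - 1 / real m + real m * (1 / real m)"
      using sb by (simp add: sum.distrib)
    also have "\<dots> = 2 - 1 / real m" using mpos by simp
    finally show "(\<Sum>c<m. ?w b c) = 2 - 1 / real m" .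
  qed
  also have "\<dots> = (2 - 1 / real m) ^ k" by simp
  finally show ?thesis by simp
qed



lemma amgm_ind:
  fixes F E :: real
  assumes "0 < E" "0 \<le> F"
  shows "ennreal F * indicator B x \<le> ennreal (1/(2*E)) * ennreal (F\<^sup>2) + ennreal (E/2) * indicator B x"
proof (cases "x \<in> B")
  case True
  have "F \<le> F\<^sup>2 / (2*E) + E/2"
  proof -
    have "0 \<le> (F - E)\<^sup>2" by simp
    then have "2*E*F \<le> F\<^sup>2 + E\<^sup>2" by (simp add: power2_eq_square algebra_simps)
    then show ?thesis using assms by (simp add: field_simps power2_eq_square)
  qed
  then have "ennreal F \<le> ennreal (F\<^sup>2 / (2*E) + E/2)" by (rule ennreal_leI)
  also have "\<dots> = ennreal (F\<^sup>2 / (2*E)) + ennreal (E/2)"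
    by (rule ennreal_plus) (use assms in auto)
  also have "ennreal (F\<^sup>2 / (2*E)) = ennreal (1/(2*E)) * ennreal (F\<^sup>2)"
    using assms by (subst ennreal_mult[symmetric]) auto
  finally show ?thesis using True by simp
qed simp

lemma avg_bound:
  fixes S :: "'s set" and Q :: "'a measure" and F :: "'s \<Rightarrow> 'a \<Rightarrow> real" and B :: "'s \<Rightarrow> 'a set"
  assumes fin: "finite S" and ne: "S \<noteq> {}"
    and Q: "prob_space Q"
    and Fm: "\<And>s. s \<in> S \<Longrightarrow> F s \<in> borel_measurable Q"
    and Fnn: "\<And>s x. 0 \<le> F s x"
    and FE: "\<And>s. s \<in> S \<Longrightarrow> (\<integral>\<^sup>+x. ennreal ((F s x)\<^sup>2) \<partial>Q) \<le> ennreal E"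
    and E: "0 < E"
    and Bm: "\<And>s. s \<in> S \<Longrightarrow> B s \<in> sets Q"
    and Nb: "\<And>x. x \<in> space Q \<Longrightarrow> real (card {s\<in>S. x \<in> B s}) \<le> N"
  shows "\<exists>s\<in>S. emeasure (density Q (\<lambda>x. ennreal (F s x))) (B s) \<le> ennreal ((1/2 + N*E/(2*card S)))"
proof -
  interpret Q: prob_space Q by fact
  have N0: "0 \<le> N" using Nb[of "SOME x. x \<in> space Q"] Q.not_empty
    by (metis of_nat_0_le_iff order_trans some_in_eq)
  let ?a = "\<lambda>s. emeasure (density Q (\<lambda>x. ennreal (F s x))) (B s)"
  have each: "?a s \<le> ennreal (1/2) + ennreal (E/2) * emeasure Q (B s)" if s: "s \<in> S" for s
  proof -
    note [measurable] = Fm[OF s] Bm[OF s]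
    have "?a s = (\<integral>\<^sup>+x. ennreal (F s x) * indicator (B s) x \<partial>Q)"
      by (rule emeasure_density) auto
    also have "\<dots> \<le> (\<integral>\<^sup>+x. ennreal (1/(2*E)) * ennreal ((F s x)\<^sup>2) + ennreal (E/2) * indicator (B s) x \<partial>Q)"
      by (rule nn_integral_mono) (rule amgm_ind[OF E Fnn])
    also have "\<dots> = ennreal (1/(2*E)) * (\<integral>\<^sup>+x. ennreal ((F s x)\<^sup>2) \<partial>Q) + ennreal (E/2) * emeasure Q (B s)"
      by (subst nn_integral_add) (auto simp: nn_integral_cmult nn_integral_cmult_indicator)
    also have "\<dots> \<le> ennreal (1/(2*E)) * ennreal E + ennreal (E/2) * emeasure Q (B s)"
      by (intro add_mono mult_left_mono FE[OF s]) auto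
    also have "ennreal (1/(2*E)) * ennreal E = ennreal (1/2)"
      using E by (subst ennreal_mult[symmetric]) auto
    finally show ?thesis .
  qed
  have sumQ: "(\<Sum>s\<in>S. emeasure Q (B s)) \<le> ennreal N"
  proof -
    have "(\<Sum>s\<in>S. emeasure Q (B s)) = (\<integral>\<^sup>+x. (\<Sum>s\<in>S. indicator (B s) x) \<partial>Q)"
      using Bm by (subst nn_integral_sum) auto
    also have "\<dots> \<le> (\<integral>\<^sup>+x. ennreal N \<partial>Q)"
    proof (rule nn_integral_mono)
      fix x assume x: "x \<in> space Q"
      have "(\<Sum>s\<in>S. indicator (B s) x :: ennreal) = (\<Sum>s\<in>{s\<in>S. x \<in> B s}. 1)"
        using fin by (intro sum.mono_neutral_cong_right) (auto simp: indicator_def)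
      also have "\<dots> = ennreal (real (card {s\<in>S. x \<in> B s}))"
        by (simp add: ennreal_of_nat_eq_real_of_nat)
      also have "\<dots> \<le> ennreal N" using Nb[OF x] by (rule ennreal_leI)
      finally show "(\<Sum>s\<in>S. indicator (B s) x :: ennreal) \<le> ennreal N" .
    qed
    also have "\<dots> = ennreal N" using Q.emeasure_space_1 by simp
    finally show ?thesis .
  qed
  have tot: "(\<Sum>s\<in>S. ?a s) \<le> ennreal (real (card S) / 2 + E/2 * N)"
  proof -
    have "(\<Sum>s\<in>S. ?a s) \<le> (\<Sum>s\<in>S. ennreal (1/2) + ennreal (E/2) * emeasure Q (B s))"
      by (rule sum_mono) (rule each)
    also have "\<dots> = of_nat (card S) * ennreal (1/2) + ennreal (E/2) * (\<Sum>s\<in>S. emeasure Q (B s))"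
      by (simp add: sum.distrib sum_distrib_left)
    also have "\<dots> \<le> of_nat (card S) * ennreal (1/2) + ennreal (E/2) * ennreal N"
      by (intro add_mono mult_left_mono sumQ) auto
    also have "of_nat (card S) * ennreal (1/2) = ennreal (real (card S) / 2)"
      by (subst ennreal_of_nat_eq_real_of_nat, subst ennreal_mult[symmetric]) auto
    also have "ennreal (E/2) * ennreal N = ennreal (E/2 * N)"
      using E N0 by (subst ennreal_mult[symmetric]) auto
    also have "ennreal (real (card S) / 2) + ennreal (E/2 * N) = ennreal (real (card S) / 2 + E/2 * N)"
      using E N0 by (subst ennreal_plus) auto
    finally show ?thesis .
  qed
  define X where "X = real (card S) / 2 + E/2 * N"
  have X0: "0 \<le> X" using E N0 by (simp add: X_def)
  have fin_a: "?a s = ennreal (enn2real (?a s))" if s: "s \<in> S" for s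
  proof -
    have "?a s \<le> (\<Sum>s\<in>S. ?a s)" using fin s by (intro member_le_sum) auto
    also have "\<dots> < \<top>" using tot by (simp add: X_def[symmetric] le_less_trans)
    finally show ?thesis by simp
  qed
  have "(\<Sum>s\<in>S. ennreal (enn2real (?a s))) = (\<Sum>s\<in>S. ?a s)"
    using fin_a by (intro sum.cong) auto
  then have "ennreal (\<Sum>s\<in>S. enn2real (?a s)) \<le> ennreal X"
    using tot by (simp add: X_def)
  then have sumr: "(\<Sum>s\<in>S. enn2real (?a s)) \<le> X"
    using X0 by (simp add: ennreal_le_iff)
  have cS: "0 < real (card S)" using fin ne by (simp add: card_gt_0_iff)
  obtain s where s: "s \<in> S" "enn2real (?a s) \<le> X / real (card S)"
  proof (rule ccontr)
    assume "\<not> thesis"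
    with that have all: "\<forall>s\<in>S. X / real (card S) < enn2real (?a s)" by force
    have "(\<Sum>s\<in>S. X / real (card S)) < (\<Sum>s\<in>S. enn2real (?a s))"
      using all fin ne by (intro sum_strict_mono) auto
    also have "(\<Sum>s\<in>S. X / real (card S)) = X" using cS by simp
    finally show False using sumr by simp
  qed
  have "X / real (card S) = 1/2 + N*E/(2*card S)"
    using cS by (simp add: X_def field_simps)
  then have "?a s \<le> ennreal (1/2 + N*E/(2*card S))"
    using s fin_a[OF s(1)] by (metis ennreal_leI)
  then show ?thesis using s(1) by blast
qed


lemma l2dist_sym: "l2dist p x y = l2dist p y x"
  unfolding l2dist_def by (simp add: power2_commute)

lemma l2dist_nonneg: "0 \<le> l2dist p x y"
  unfolding l2dist_def by (auto intro!: sum_nonneg)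

lemma l2dist_tri: "l2dist p x z \<le> l2dist p x y + l2dist p y z"
proof -
  have "l2dist p x z = L2_set (\<lambda>i. (x i - y i) + (y i - z i)) {..<p}"
    unfolding l2dist_def L2_set_def by simp
  also have "\<dots> \<le> L2_set (\<lambda>i. x i - y i) {..<p} + L2_set (\<lambda>i. y i - z i) {..<p}"
    by (rule L2_set_triangle_ineq)
  also have "\<dots> = l2dist p x y + l2dist p y z"
    unfolding l2dist_def L2_set_def by simp
  finally show ?thesis .
qed

lemma l2dist_meas1[measurable]: "l2dist p \<theta> \<in> borel_measurable (Rp p)"
  unfolding l2dist_def Rp_def by measurable

lemma sets_sample_gauss: "sets (sample n (gauss p \<theta>)) = sets (PiM {..<n} (\<lambda>_. Rp p))"
  unfolding sample_def by (rule sets_PiM_cong) simp_all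

lemma space_sample_gauss: "space (sample n (gauss p \<theta>)) = space (PiM {..<n} (\<lambda>_. Rp p))"
  using sets_eq_imp_space_eq[OF sets_sample_gauss] .

lemma est_meas: "est \<in> estimators p n \<Longrightarrow> est \<in> sample n (gauss p \<theta>) \<rightarrow>\<^sub>M Rp p"
  unfolding estimators_def using measurable_cong_sets[OF sets_sample_gauss refl] by blast

lemma prob_sample_gauss: "prob_space (sample n (gauss p \<theta>))"
  unfolding sample_def by (rule prob_space_PiM) (rule prob_gauss)

lemma adv_gauss:
  assumes "\<theta> \<in> sparse_vecs p k" "l2dist p \<theta> \<theta>' \<le> \<epsilon>"
  shows "(\<theta>, gauss p \<theta>') \<in> adversary p k \<epsilon>"
proof -
  have "W1 p (gauss p \<theta>) (gauss p \<theta>') \<le> ennreal \<epsilon>"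
    using W1_gauss[of p \<theta> \<theta>'] assms(2) by (meson ennreal_leI order_trans)
  then show ?thesis using assms(1) prob_gauss by (simp add: adversary_def)
qed

lemma event_sets:
  assumes "est \<in> estimators p n"
  shows "{xs \<in> space (sample n (gauss p \<theta>')). t \<le> l2dist p \<theta> (est xs)} \<in> sets (sample n (gauss p \<theta>'))"
    and "{xs \<in> space (sample n (gauss p \<theta>')). l2dist p \<theta> (est xs) < t} \<in> sets (sample n (gauss p \<theta>'))"
proof -
  note [measurable] = est_meas[OF assms, of \<theta>']
  show "{xs \<in> space (sample n (gauss p \<theta>')). t \<le> l2dist p \<theta> (est xs)} \<in> sets (sample n (gauss p \<theta>'))"
    by measurable
  show "{xs \<in> space (sample n (gauss p \<theta>')). l2dist p \<theta> (est xs) < t} \<in> sets (sample n (gauss p \<theta>'))"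
    by measurable
qed


lemma eps_regime:
  assumes p: "0 < p" and k: "1 \<le> k" and eps: "0 \<le> \<epsilon>" and T: "T \<le> \<epsilon> / 16"
    and est: "est \<in> estimators p n"
  shows "ennreal (1/25) \<le> (SUP (\<theta>, P)\<in>adversary p k \<epsilon>. emeasure (sample n P) {xs \<in> space (sample n P). T \<le> l2dist p \<theta> (est xs)})"
proof -
  define \<theta>0 where "\<theta>0 = (\<lambda>i\<in>{..<p}. 0::real)"
  define \<theta>1 where "\<theta>1 = (\<lambda>i\<in>{..<p}. if i = 0 then \<epsilon> else 0::real)"
  have d01: "l2dist p \<theta>0 \<theta>1 = \<epsilon>"
  proof -
    have "(\<Sum>i<p. (\<theta>0 i - \<theta>1 i)\<^sup>2) = (\<Sum>i<p. if i = 0 then \<epsilon>\<^sup>2 else 0)"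
      by (intro sum.cong) (auto simp: \<theta>0_def \<theta>1_def)
    also have "\<dots> = \<epsilon>\<^sup>2" using p by simp
    finally show ?thesis using eps by (simp add: l2dist_def)
  qed
  have d11: "l2dist p \<theta>1 \<theta>1 = 0" by (simp add: l2dist_def)
  have sp0: "\<theta>0 \<in> sparse_vecs p k"
    by (simp add: sparse_vecs_def \<theta>0_def Rp_def space_PiM)
  have sp1: "\<theta>1 \<in> sparse_vecs p k"
  proof -
    have "{i \<in> {..<p}. \<theta>1 i \<noteq> 0} \<subseteq> {0}" by (auto simp: \<theta>1_def split: if_splits)
    then have "card {i \<in> {..<p}. \<theta>1 i \<noteq> 0} \<le> card {0::nat}" by (intro card_mono) auto
    then show ?thesis using k by (simp add: sparse_vecs_def \<theta>1_def Rp_def space_PiM)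
  qed
  have a0: "(\<theta>0, gauss p \<theta>1) \<in> adversary p k \<epsilon>" using adv_gauss[OF sp0] d01 by simp
  have a1: "(\<theta>1, gauss p \<theta>1) \<in> adversary p k \<epsilon>" using adv_gauss[OF sp1] d11 eps by simp
  let ?G = "sample n (gauss p \<theta>1)"
  interpret G: prob_space ?G by (rule prob_sample_gauss)
  define E0 where "E0 = {xs \<in> space ?G. T \<le> l2dist p \<theta>0 (est xs)}"
  define E1 where "E1 = {xs \<in> space ?G. T \<le> l2dist p \<theta>1 (est xs)}"
  have E0s: "E0 \<in> G.events" unfolding E0_def by (rule event_sets(1)[OF est])
  have E1s: "E1 \<in> G.events" unfolding E1_def by (rule event_sets(1)[OF est])
  have cover: "E0 \<union> E1 = space ?G"
  proof
    show "E0 \<union> E1 \<subseteq> space ?G" by (auto simp: E0_def E1_def)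
    show "space ?G \<subseteq> E0 \<union> E1"
    proof
      fix xs assume xs: "xs \<in> space ?G"
      show "xs \<in> E0 \<union> E1"
      proof (rule ccontr)
        assume "xs \<notin> E0 \<union> E1"
        then have "l2dist p \<theta>0 (est xs) < T" "l2dist p \<theta>1 (est xs) < T"
          using xs by (auto simp: E0_def E1_def)
        moreover have "l2dist p \<theta>0 \<theta>1 \<le> l2dist p \<theta>0 (est xs) + l2dist p (est xs) \<theta>1"
          by (rule l2dist_tri)
        moreover have "l2dist p (est xs) \<theta>1 = l2dist p \<theta>1 (est xs)" by (rule l2dist_sym)
        ultimately show False using d01 T eps by linarith
      qed
    qed
  qed
  have "1 = G.prob (E0 \<union> E1)" using cover G.prob_space by simp
  also have "\<dots> \<le> G.prob E0 + G.prob E1" using E0s E1s by (intro measure_subadditive) auto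
  finally have "1/2 \<le> G.prob E0 \<or> 1/2 \<le> G.prob E1" by linarith
  then show ?thesis
  proof
    assume h: "1/2 \<le> G.prob E0"
    have "ennreal (1/25) \<le> emeasure ?G E0"
      using h by (simp add: G.emeasure_eq_measure)
    also have "\<dots> \<le> (SUP (\<theta>, P)\<in>adversary p k \<epsilon>. emeasure (sample n P) {xs \<in> space (sample n P). T \<le> l2dist p \<theta> (est xs)})"
      using a0 unfolding E0_def by (auto intro!: SUP_upper2)
    finally show ?thesis .
  next
    assume h: "1/2 \<le> G.prob E1"
    have "ennreal (1/25) \<le> emeasure ?G E1"
      using h by (simp add: G.emeasure_eq_measure)
    also have "\<dots> \<le> (SUP (\<theta>, P)\<in>adversary p k \<epsilon>. emeasure (sample n P) {xs \<in> space (sample n P). T \<le> l2dist p \<theta> (est xs)})"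
      using a1 unfolding E1_def by (auto intro!: SUP_upper2)
    finally show ?thesis .
  qed
qed



lemma poly_ineq:
  fixes x :: real
  assumes "x = 2 \<or> 3 \<le> x"
  shows "(2*x - 1)^4 * 390625 \<le> 279841 * x^7"
  using assms
proof
  assume "x = 2" then show ?thesis by simp
next
  assume x: "3 \<le> x"
  have "(2*x - 1)^4 \<le> (2*x)^4" using x by (intro power_mono) auto
  also have "\<dots> = 16 * x^4" by simp
  finally have a: "(2*x - 1)^4 * 390625 \<le> 6250000 * x^4" by simp
  have "(3::real)^3 \<le> x^3" using x by (intro power_mono) auto
  then have "27 \<le> x^3" by simp
  then have "279841 * 27 * x^4 \<le> 279841 * x^3 * x^4"
    by (intro mult_right_mono) auto
  also have "\<dots> = 279841 * x^7" by (simp add: power_add[symmetric])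
  finally have b: "7555707 * x^4 \<le> 279841 * x^7" by simp
  have "6250000 * x^4 \<le> 7555707 * x^4" by simp
  with a b show ?thesis by linarith
qed

lemma q_bound:
  fixes m :: nat
  assumes m: "2 \<le> m"
  shows "(real m powr (1/8))^2 * (2 - 1/real m) / real m \<le> 23/25"
proof -
  define x where "x = real m"
  define u where "u = x powr (1/8)"
  have x2: "2 \<le> x" using m by (simp add: x_def)
  have xc: "x = 2 \<or> 3 \<le> x" using m unfolding x_def by (cases "m = 2") auto
  have u0: "0 < u" using x2 by (simp add: u_def)
  have u8: "u^8 = x" unfolding u_def using x2 by (simp add: powr_power)
  define q where "q = u^2 * (2 - 1/x) / x"
  have "1/x \<le> 2" using x2 by (simp add: field_simps)
  then have q0: "0 \<le> q" using u0 x2 unfolding q_def by (intro divide_nonneg_nonneg mult_nonneg_nonneg) auto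
  have "q^4 = u^8 * (2 - 1/x)^4 / x^4"
    by (simp add: q_def power_mult_distrib power_divide power_mult[symmetric])
  also have "\<dots> = (2*x - 1)^4 / x^7"
  proof -
    have "2 - 1/x = (2*x - 1)/x" using x2 by (simp add: field_simps)
    moreover have "x * x^7 = x^8" by (simp add: power_Suc[symmetric] del: power_Suc)
    ultimately show ?thesis using x2 by (simp add: u8 power_divide field_simps power_add[symmetric])
  qed
  also have "\<dots> \<le> (23/25)^4"
    using poly_ineq[OF xc] x2 by (simp add: field_simps)
  finally have "q^4 \<le> (23/25)^4" .
  then have "q \<le> 23/25"
  proof (rule contrapos_pp)
    assume "\<not> q \<le> 23/25"
    then have "23/25 < q" by simp
    then have "(23/25)^4 < q^4" by (rule power_strict_mono) auto
    then show "\<not> q^4 \<le> (23/25)^4" by simp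
  qed
  then show ?thesis by (simp add: q_def u_def x_def)
qed


lemma sparse_regime:
  assumes k: "1 \<le> k" and kp: "real k < real p / 2" and n: "1 \<le> n" and eps: "0 \<le> \<epsilon>"
    and T: "T \<le> sqrt (real k * ln (real p / real k) / real n) / 16"
    and est: "est \<in> estimators p n"
  shows "ennreal (1/25) \<le> (SUP (\<theta>, P)\<in>adversary p k \<epsilon>. emeasure (sample n P) {xs \<in> space (sample n P). T \<le> l2dist p \<theta> (est xs)})"
proof -
  define m where "m = p div k"
  have k0: "0 < k" using k by simp
  have "2 * k < p" using kp by linarith
  then have m2: "2 \<le> m" unfolding m_def using div_le_mono[of "2*k" p k] k0 by simp
  have km: "k * m \<le> p" unfolding m_def by (simp add: mult.commute)
  have pk: "p < (m + 1) * k"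
    unfolding m_def using k0 by (metis add.commute div_mult_mod_eq mod_less_divisor mult.commute mult_Suc nat_add_left_cancel_less Suc_eq_plus1)
  have mr: "2 \<le> real m" using m2 by simp
  have lnm: "0 < ln (real m)" using mr by simp
  have "real p < (real m + 1) * real k" using pk by (metis of_nat_1 of_nat_add of_nat_less_iff of_nat_mult)
  also have "\<dots> \<le> (real m)^2 * real k"
  proof (intro mult_right_mono)
    have "2 * real m \<le> real m * real m" using mr by (intro mult_right_mono) auto
    then show "real m + 1 \<le> (real m)^2" unfolding power2_eq_square using mr by linarith
  qed simp
  finally have "real p / real k \<le> (real m)^2" using k0 by (simp add: field_simps)
  moreover have "0 < real p / real k" using k0 \<open>2*k < p\<close> by simp
  ultimately have "ln (real p / real k) \<le> ln ((real m)^2)"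
    using mr by (subst ln_le_cancel_iff) auto
  also have "\<dots> = 2 * ln (real m)" using mr by (simp add: ln_realpow)
  finally have lnpk: "ln (real p / real k) \<le> 2 * ln (real m)" .
  define \<delta> where "\<delta> = sqrt (ln (real m) / (8 * real n))"
  have d2: "\<delta>^2 = ln (real m) / (8 * real n)" unfolding \<delta>_def using lnm n by simp
  have d0: "0 < \<delta>" unfolding \<delta>_def using lnm n by simp
  define r where "r = sqrt (real k * ln (real m) / (128 * real n))"
  have r0: "0 < r" unfolding r_def using lnm n k by simp
  have r2: "r^2 = real k * \<delta>^2 / 16" unfolding r_def using lnm n k d2 by (simp add: field_simps)
  have Tr: "T \<le> r"
  proof -
    have s16: "sqrt (256::real) = 16"
    proof -
      have "(256::real) = 16^2" by simp
      then show ?thesis by (simp only:) simp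
    qed
    have "sqrt (real k * ln (real p / real k) / real n) / 16 = sqrt (real k * ln (real p / real k) / real n / 256)"
      by (simp only: real_sqrt_divide[of _ 256] s16)
    also have "\<dots> \<le> r" unfolding r_def
      using lnpk k n by (intro real_sqrt_le_mono) (simp add: field_simps)
    finally show ?thesis using T by linarith
  qed
  define S where "S = PiE {..<k} (\<lambda>_. {..<m})"
  define \<theta> where "\<theta> = (\<lambda>s. hyp p k m \<delta> s)"
  define Q where "Q = sample n (gauss p (\<lambda>_. 0))"
  define B where "B = (\<lambda>s. {xs \<in> space (PiM {..<n} (\<lambda>_. Rp p)). l2dist p (\<theta> s) (est xs) < r})"
  define E where "E = exp (real n * (real k * \<delta>^2))"
  define u where "u = real m powr (1/8)"
  define N where "N = u^k * (2 - 1 / real m) ^ k"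
  have u0: "0 < u" using mr by (simp add: u_def)
  have uk: "real m powr (real k / 8) = u^k"
    unfolding u_def using mr by (simp add: powr_power)
  have Eu: "E = u^k"
  proof -
    have eq: "real n * (real k * \<delta>^2) = real k / 8 * ln (real m)" using d2 n by (simp add: field_simps)
    have "E = exp (real k / 8 * ln (real m))" unfolding E_def by (simp only: eq)
    then have "E = real m powr (real k / 8)" using mr by (simp add: powr_def)
    then show ?thesis using uk by simp
  qed
  have finS: "finite S" by (simp add: S_def finite_PiE)
  have neS: "S \<noteq> {}"
  proof -
    have "(\<lambda>b\<in>{..<k}. 0) \<in> S" using m2 by (auto simp: S_def)
    then show ?thesis by blast
  qed
  have cardS: "card S = m^k" by (simp add: S_def card_PiE)
  have spaceQ: "space Q = space (PiM {..<n} (\<lambda>_. Rp p))" by (simp add: Q_def space_sample_gauss)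
  have Bs: "B s = {xs \<in> space (sample n (gauss p \<theta>')). l2dist p (\<theta> s) (est xs) < r}" for s \<theta>'
    by (simp add: B_def space_sample_gauss)
  have N0: "0 \<le> N" using u0 mr unfolding N_def by (intro mult_nonneg_nonneg zero_le_power) (auto simp: field_simps)
  have "\<exists>s\<in>S. emeasure (density Q (\<lambda>x. ennreal (Fd n p (\<theta> s) x))) (B s) \<le> ennreal (1/2 + N*E/(2*card S))"
  proof (rule avg_bound[OF finS neS])
    show "prob_space Q" unfolding Q_def by (rule prob_sample_gauss)
    show "\<And>s. s \<in> S \<Longrightarrow> Fd n p (\<theta> s) \<in> borel_measurable Q" unfolding Q_def by (rule Fd_meas)
    show "\<And>s x. 0 \<le> Fd n p (\<theta> s) x" by (rule Fd_nonneg)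
    show "(\<integral>\<^sup>+x. ennreal ((Fd n p (\<theta> s) x)\<^sup>2) \<partial>Q) \<le> ennreal E" if s: "s \<in> S" for s
      unfolding Q_def nn_int_Fd_sq E_def \<theta>_def using hyp_norm_sq[OF km s[unfolded S_def]] by simp
    show "0 < E" by (simp add: E_def)
    show "\<And>s. s \<in> S \<Longrightarrow> B s \<in> sets Q"
      using Bs[of _ "\<lambda>_. 0"] event_sets(2)[OF est] by (simp add: Q_def)
    show "real (card {s\<in>S. x \<in> B s}) \<le> N" if x: "x \<in> space Q" for x
    proof (cases "{s\<in>S. x \<in> B s} = {}")
      case True show ?thesis using N0 by (simp only: True card.empty of_nat_0)
    next
      case False
      then obtain s0 where s0: "s0 \<in> S" "x \<in> B s0" by blast
      have sub: "{s\<in>S. x \<in> B s} \<subseteq> {s \<in> S. real (hdist k s s0) < real k / 8}"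
      proof safe
        fix s assume s: "s \<in> S" "x \<in> B s"
        have "l2dist p (\<theta> s) (\<theta> s0) \<le> l2dist p (\<theta> s) (est x) + l2dist p (est x) (\<theta> s0)"
          by (rule l2dist_tri)
        also have "\<dots> < 2 * r"
        proof -
          have a: "l2dist p (\<theta> s) (est x) < r" using s(2) by (simp add: B_def)
          have b: "l2dist p (\<theta> s0) (est x) < r" using s0(2) by (simp add: B_def)
          have "l2dist p (est x) (\<theta> s0) = l2dist p (\<theta> s0) (est x)" by (rule l2dist_sym)
          with a b show ?thesis by linarith
        qed
        finally have lt: "l2dist p (\<theta> s) (\<theta> s0) < 2 * r" .
        have "l2dist p (\<theta> s) (\<theta> s0) = sqrt (2 * \<delta>^2 * real (hdist k s s0))"
          unfolding l2dist_def \<theta>_def using hyp_dist_sq[OF km s(1)[unfolded S_def] s0(1)[unfolded S_def]] by simp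
        with lt have "sqrt (2 * \<delta>^2 * real (hdist k s s0)) < 2 * r" by simp
        note sq_lt = this
        have nn: "0 \<le> 2 * \<delta>^2 * real (hdist k s s0)" by simp
        have "2 * \<delta>^2 * real (hdist k s s0) = (sqrt (2 * \<delta>^2 * real (hdist k s s0)))^2"
          using nn by simp
        also have "\<dots> < (2 * r)^2" by (rule power_strict_mono[OF sq_lt]) auto
        also have "\<dots> = 4 * r^2" by (simp add: power_mult_distrib)
        also have "\<dots> = 2 * \<delta>^2 * (real k / 8)" by (simp add: r2 field_simps)
        finally have lt2: "2 * \<delta>^2 * real (hdist k s s0) < 2 * \<delta>^2 * (real k / 8)" .
        have pos: "0 < 2 * \<delta>^2" using d0 by simp
        show "real (hdist k s s0) < real k / 8" using lt2 mult_less_cancel_left_pos[OF pos] by blast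
      qed
      have "real (card {s\<in>S. x \<in> B s}) \<le> real (card {s \<in> S. real (hdist k s s0) < real k / 8})"
        using finS sub by (intro of_nat_mono card_mono) auto
      also have "\<dots> \<le> real m powr (real k / 8) * (2 - 1 / real m) ^ k"
        unfolding S_def using count_bound[of m s0 k "real k / 8"] m2 s0(1) by (simp add: S_def)
      also have "\<dots> = N" by (simp add: N_def uk)
      finally show ?thesis .
    qed
  qed
  then obtain s where s: "s \<in> S" and bnd: "emeasure (density Q (\<lambda>x. ennreal (Fd n p (\<theta> s) x))) (B s) \<le> ennreal (1/2 + N*E/(2*card S))"
    by blast
  let ?P = "sample n (gauss p (\<theta> s))"
  interpret P: prob_space ?P by (rule prob_sample_gauss)
  have Pd: "density Q (\<lambda>x. ennreal (Fd n p (\<theta> s) x)) = ?P" unfolding Q_def by (rule sample_density[symmetric])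
  have NE: "N * E / real (card S) \<le> 23/25"
  proof -
    define q where "q = u^2 * (2 - 1/real m) / real m"
    have "1/real m \<le> 2" using mr by (simp add: field_simps)
    then have q0: "0 \<le> q" using u0 mr unfolding q_def by (intro divide_nonneg_nonneg mult_nonneg_nonneg) auto
    have q1: "q \<le> 23/25" unfolding q_def u_def by (rule q_bound[OF m2])
    have "N * E = (u^2 * (2 - 1/real m))^k"
      unfolding N_def Eu by (simp add: power_mult_distrib power2_eq_square mult_ac)
    then have "N * E / real (card S) = q^k"
      unfolding q_def cardS by (simp add: power_divide)
    also have "\<dots> \<le> q^1" using q0 q1 k by (intro power_decreasing) auto
    also have "\<dots> = q" by simp
    finally show ?thesis using q1 by (rule order_trans)
  qed
  have BsP: "B s \<in> P.events" using Bs[of s "\<theta> s"] event_sets(2)[OF est] by simp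
  have "P.prob (B s) \<le> 24/25"
  proof -
    have "ennreal (P.prob (B s)) \<le> ennreal (1/2 + N*E/(2*card S))"
      using bnd Pd by (simp add: P.emeasure_eq_measure)
    moreover have nnX: "0 \<le> 1/2 + N*E/(2*card S)"
      using N0 by (intro add_nonneg_nonneg divide_nonneg_nonneg mult_nonneg_nonneg) (auto simp: E_def)
    ultimately have "P.prob (B s) \<le> 1/2 + N*E/(2*card S)"
      by (simp add: ennreal_le_iff)
    also have "\<dots> \<le> 24/25" using NE by (simp add: field_simps)
    finally show ?thesis .
  qed
  then have compl: "1/25 \<le> P.prob (space ?P - B s)" using P.prob_compl[OF BsP] by simp
  define Ev where "Ev = {xs \<in> space ?P. T \<le> l2dist p (\<theta> s) (est xs)}"
  have Evs: "Ev \<in> P.events" unfolding Ev_def by (rule event_sets(1)[OF est])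
  have "space ?P - B s \<subseteq> Ev" using Tr by (auto simp: Ev_def Bs[of s "\<theta> s"])
  then have "P.prob (space ?P - B s) \<le> P.prob Ev" using Evs by (intro P.finite_measure_mono) auto
  with compl have "1/25 \<le> P.prob Ev" by simp
  then have "ennreal (1/25) \<le> emeasure ?P Ev" by (simp add: P.emeasure_eq_measure)
  also have "\<dots> \<le> (SUP (\<theta>, P)\<in>adversary p k \<epsilon>. emeasure (sample n P) {xs \<in> space (sample n P). T \<le> l2dist p \<theta> (est xs)})"
  proof -
    have "(\<theta> s, gauss p (\<theta> s)) \<in> adversary p k \<epsilon>"
      using adv_gauss[OF hyp_sparse[of m p k \<delta> s]] m2 eps by (simp add: \<theta>_def l2dist_def)
    then show ?thesis unfolding Ev_def by (auto intro!: SUP_upper2)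
  qed
  finally show ?thesis .
qed


theorem theorem7:
  shows "\<exists>C>0. \<exists>c>0. \<forall>(p::nat) (k::nat) (n::nat) (\<epsilon>::real).
    1 \<le> k \<longrightarrow> real k < real p / 2 \<longrightarrow> 1 \<le> n \<longrightarrow> 0 \<le> \<epsilon> \<longrightarrow>
    (INF est \<in> estimators p n. SUP (\<theta>, P) \<in> adversary p k \<epsilon>.
       emeasure (sample n P)
         {xs \<in> space (sample n P).
            l2dist p \<theta> (est xs) \<ge> C * max (sqrt (real k * ln (real p / real k) / real n)) \<epsilon>})
    \<ge> ennreal c"
proof -
  have main: "ennreal (1/25) \<le> (INF est \<in> estimators p n. SUP (\<theta>, P) \<in> adversary p k \<epsilon>.
       emeasure (sample n P)
         {xs \<in> space (sample n P).
            l2dist p \<theta> (est xs) \<ge> 1/16 * max (sqrt (real k * ln (real p / real k) / real n)) \<epsilon>})"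
    if k: "1 \<le> k" and kp: "real k < real p / 2" and n: "1 \<le> n" and eps: "0 \<le> \<epsilon>"
    for p k n :: nat and \<epsilon> :: real
  proof (rule INF_greatest)
    fix est assume est: "est \<in> estimators p n"
    show "ennreal (1/25) \<le> (SUP (\<theta>, P) \<in> adversary p k \<epsilon>.
       emeasure (sample n P)
         {xs \<in> space (sample n P).
            l2dist p \<theta> (est xs) \<ge> 1/16 * max (sqrt (real k * ln (real p / real k) / real n)) \<epsilon>})"
    proof (cases "sqrt (real k * ln (real p / real k) / real n) \<le> \<epsilon>")
      case True
      have p: "0 < p" using k kp by linarith
      show ?thesis
        by (rule eps_regime[OF p k eps _ est]) (use True in simp)
    next
      case False
      show ?thesis
        by (rule sparse_regime[OF k kp n eps _ est]) (use False in simp)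
    qed
  qed
  show ?thesis
    by (rule exI[of _ "1/16"], simp, rule exI[of _ "1/25"], simp) (use main in auto)
qed

end
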